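(* Let $Q=[u_1,u_2,u_3,u_4,u_5,u_6]\subset\mathbb{S}^2$ be a spherical polygon not contained in any closed hemisphere and without self-intersections and antipodal intersections. Then $Q$ has 6 inflections.
   Context: A spherical polygon $Q=[u_1,\dots,u_n]$ has edges the minimal great-circle arcs from $u_i$ to $u_{i+1}$ (indices mod $n$). Standing assumption: no three vertices lie on a common great circle. A self-intersection is a pair of non-adjacent edges that intersect; an antipodal intersection is a pair of non-adjacent edges $e,f$ with $e\cap(-f)\ne\emptyset$. With $[a,b,c]$ the determinant, $\{u_i,u_{i+1}\}$ is an inflection if $[u_{i-1},u_i,u_{i+1}]$ and $[u_i,u_{i+1},u_{i+2}]$ have opposite signs. *)

theory Defs
  imports "HOL-Analysis.Analysis"
begin

text \<open>Points of the unit sphere are unit vectors of real^3. A spherical polygon with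
  n vertices is a function u :: nat => real^3; vertex i is u (i mod n).\<close>

definition vtx :: "nat \<Rightarrow> (nat \<Rightarrow> real^3) \<Rightarrow> nat \<Rightarrow> real^3" where
  "vtx n u i = u (i mod n)"

definition det3 :: "real^3 \<Rightarrow> real^3 \<Rightarrow> real^3 \<Rightarrow> real" where
  "det3 a b c = det ((\<chi> i. if i = 1 then a else if i = 2 then b else c) :: real^3^3)"

definition on_sphere :: "real^3 \<Rightarrow> bool" where
  "on_sphere x \<longleftrightarrow> norm x = 1"

text \<open>Minimal great-circle arc between unit vectors a, b with b \<noteq> -a:
  the unit vectors in the cone spanned by a and b.\<close>
definition arc :: "real^3 \<Rightarrow> real^3 \<Rightarrow> (real^3) set" where
  "arc a b = {x. norm x = 1 \<and> (\<exists>\<alpha> \<beta>. \<alpha> \<ge> 0 \<and> \<beta> \<ge> 0 \<and> x = \<alpha> *\<^sub>R a + \<beta> *\<^sub>R b)}"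

definition edge :: "nat \<Rightarrow> (nat \<Rightarrow> real^3) \<Rightarrow> nat \<Rightarrow> (real^3) set" where
  "edge n u i = arc (vtx n u i) (vtx n u (i + 1))"

definition nonadjacent :: "nat \<Rightarrow> nat \<Rightarrow> nat \<Rightarrow> bool" where
  "nonadjacent n i j \<longleftrightarrow> i < n \<and> j < n \<and> i \<noteq> j \<and> (i + 1) mod n \<noteq> j \<and> (j + 1) mod n \<noteq> i"

definition no_three_on_great_circle :: "nat \<Rightarrow> (nat \<Rightarrow> real^3) \<Rightarrow> bool" where
  "no_three_on_great_circle n u \<longleftrightarrow>
     (\<forall>i j k. i < n \<and> j < n \<and> k < n \<and> i \<noteq> j \<and> j \<noteq> k \<and> i \<noteq> k \<longrightarrow> det3 (u i) (u j) (u k) \<noteq> 0)"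

definition in_closed_hemisphere :: "nat \<Rightarrow> (nat \<Rightarrow> real^3) \<Rightarrow> bool" where
  "in_closed_hemisphere n u \<longleftrightarrow> (\<exists>v. v \<noteq> 0 \<and> (\<forall>i<n. v \<bullet> u i \<ge> 0))"

definition has_self_intersection :: "nat \<Rightarrow> (nat \<Rightarrow> real^3) \<Rightarrow> bool" where
  "has_self_intersection n u \<longleftrightarrow>
     (\<exists>i j. nonadjacent n i j \<and> edge n u i \<inter> edge n u j \<noteq> {})"

definition has_antipodal_intersection :: "nat \<Rightarrow> (nat \<Rightarrow> real^3) \<Rightarrow> bool" where
  "has_antipodal_intersection n u \<longleftrightarrow>
     (\<exists>i j. nonadjacent n i j \<and> edge n u i \<inter> uminus ` edge n u j \<noteq> {})"

definition is_inflection :: "nat \<Rightarrow> (nat \<Rightarrow> real^3) \<Rightarrow> nat \<Rightarrow> bool" where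
  "is_inflection n u i \<longleftrightarrow>
     det3 (vtx n u (i + n - 1)) (vtx n u i) (vtx n u (i + 1))
       * det3 (vtx n u i) (vtx n u (i + 1)) (vtx n u (i + 2)) < 0"

definition num_inflections :: "nat \<Rightarrow> (nat \<Rightarrow> real^3) \<Rightarrow> nat" where
  "num_inflections n u = card {i. i < n \<and> is_inflection n u i}"

end

theory Submission imports Defs "HOL-Analysis.Cross3" begin

lemma det3_exp: "det3 a b c = a$1*b$2*c$3 + a$2*b$3*c$1 + a$3*b$1*c$2 - a$1*b$3*c$2 - a$2*b$1*c$3 - a$3*b$2*c$1"
  unfolding det3_def det_3 by simp

lemma det3_cross: "det3 a b c = cross3 a b \<bullet> c"
  by (simp add: det3_exp cross3_simps)

lemma gp_id: "det3 a b c * det3 a d e - det3 a b d * det3 a c e + det3 a b e * det3 a c d = 0"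
  unfolding det3_exp by algebra

lemma plucker: "det3 a b d *\<^sub>R c - det3 a b c *\<^sub>R d = det3 c d a *\<^sub>R b - det3 c d b *\<^sub>R a"
  by (simp add: det3_exp vec_eq_iff forall_3 algebra_simps)

lemma det3_rep: "det3 a a c = 0" "det3 a c a = 0" "det3 c a a = 0" by (simp_all add: det3_exp)

lemma det3_lin1: "det3 (x *\<^sub>R a - y *\<^sub>R b) c d = x * det3 a c d - y * det3 b c d"
  by (simp add: det3_exp algebra_simps)

lemma det3_zero1: "det3 0 c d = 0" by (simp add: det3_exp)

lemma gp_sign:
  fixes x1 x2 x3 x4 x5 x6 :: real
  assumes "x1*x2 - x3*x4 + x5*x6 = 0"
  shows "\<not>(0 < x1*x2 \<and> x3*x4 < 0 \<and> 0 < x5*x6) \<and> \<not>(x1*x2 < 0 \<and> 0 < x3*x4 \<and> x5*x6 < 0)"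
  using assms by linarith

lemma in_arcI: "norm x = 1 \<Longrightarrow> s \<ge> 0 \<Longrightarrow> t \<ge> 0 \<Longrightarrow> x = s *\<^sub>R a + t *\<^sub>R b \<Longrightarrow> x \<in> arc a b"
  unfolding arc_def by blast

lemma cross_lemma:
  assumes h1: "det3 a b c * det3 a b d < 0" and h2: "det3 c d a * det3 c d b < 0"
  shows "arc a b \<inter> arc c d \<noteq> {} \<or> arc a b \<inter> uminus ` arc c d \<noteq> {}"
proof -
  define p where "p = det3 a b d *\<^sub>R c - det3 a b c *\<^sub>R d"
  have p2: "p = det3 c d a *\<^sub>R b - det3 c d b *\<^sub>R a" unfolding p_def by (rule plucker)
  have "det3 p d a = det3 a b d * det3 c d a" unfolding p_def det3_lin1 by (simp add: det3_rep)
  moreover have "det3 a b d \<noteq> 0" "det3 c d a \<noteq> 0" using h1 h2 by auto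
  ultimately have "p \<noteq> 0" by (auto simp: det3_zero1)
  hence np: "norm p > 0" by simp
  define q where "q = (1 / norm p) *\<^sub>R p"
  have nq: "norm q = 1" "norm (-q) = 1" using np by (simp_all add: q_def)
  define n where "n = norm p"
  have qa: "q = (det3 a b d / n) *\<^sub>R c + (- det3 a b c / n) *\<^sub>R d"
    unfolding q_def p_def n_def by (simp add: algebra_simps scaleR_diff_right)
  have qb: "q = (- det3 c d b / n) *\<^sub>R a + (det3 c d a / n) *\<^sub>R b"
    unfolding q_def p2 n_def by (simp add: algebra_simps scaleR_diff_right)
  have mqa: "-q = (- det3 a b d / n) *\<^sub>R c + (det3 a b c / n) *\<^sub>R d"
    unfolding qa by (simp add: algebra_simps)
  have mqb: "-q = (det3 c d b / n) *\<^sub>R a + (- det3 c d a / n) *\<^sub>R b"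
    unfolding qb by (simp add: algebra_simps)
  have n0: "n > 0" using np n_def by simp
  have s1: "(0 < det3 a b d \<and> det3 a b c < 0) \<or> (det3 a b d < 0 \<and> 0 < det3 a b c)"
    using h1 by (auto simp: mult_less_0_iff)
  have s2: "(0 < det3 c d a \<and> det3 c d b < 0) \<or> (det3 c d a < 0 \<and> 0 < det3 c d b)"
    using h2 by (auto simp: mult_less_0_iff)
  show ?thesis
  proof (cases "0 < det3 a b d")
    case True
    hence qc: "q \<in> arc c d" using s1 n0 nq by (intro in_arcI[OF _ _ _ qa]) (auto simp: divide_le_0_iff zero_le_divide_iff)
    show ?thesis
    proof (cases "0 < det3 c d a")
      case True
      hence "q \<in> arc a b" using s2 n0 nq by (intro in_arcI[OF _ _ _ qb]) (auto simp: divide_le_0_iff zero_le_divide_iff)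
      thus ?thesis using qc by blast
    next
      case False
      hence "-q \<in> arc a b" using s2 n0 nq by (intro in_arcI[OF _ _ _ mqb]) (auto simp: divide_le_0_iff zero_le_divide_iff)
      thus ?thesis using qc by blast
    qed
  next
    case False
    hence qc: "-q \<in> arc c d" using s1 n0 nq by (intro in_arcI[OF _ _ _ mqa]) (auto simp: divide_le_0_iff zero_le_divide_iff)
    show ?thesis
    proof (cases "0 < det3 c d a")
      case True
      hence "q \<in> arc a b" using s2 n0 nq by (intro in_arcI[OF _ _ _ qb]) (auto simp: divide_le_0_iff zero_le_divide_iff)
      moreover have "q \<in> uminus ` arc c d" using qc by (metis image_eqI minus_minus)
      ultimately show ?thesis by blast
    next
      case False
      hence "-q \<in> arc a b" using s2 n0 nq by (intro in_arcI[OF _ _ _ mqb]) (auto simp: divide_le_0_iff zero_le_divide_iff)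
      thus ?thesis using qc by blast
    qed
  qed
qed

lemma cross_gen:
  assumes "\<not> has_self_intersection n u" "\<not> has_antipodal_intersection n u" "nonadjacent n i j"
  shows "\<not> (det3 (vtx n u i) (vtx n u (i+1)) (vtx n u j) * det3 (vtx n u i) (vtx n u (i+1)) (vtx n u (j+1)) < 0
        \<and> det3 (vtx n u j) (vtx n u (j+1)) (vtx n u i) * det3 (vtx n u j) (vtx n u (j+1)) (vtx n u (i+1)) < 0)"
  using cross_lemma[of "vtx n u i" "vtx n u (i+1)" "vtx n u j" "vtx n u (j+1)"] assms
  unfolding has_self_intersection_def has_antipodal_intersection_def edge_def by blast

lemma cross_gen6:
  assumes "\<not> has_self_intersection 6 u" "\<not> has_antipodal_intersection 6 u" "nonadjacent 6 i j"
    "i' = (i+1) mod 6" "j' = (j+1) mod 6"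
  shows "\<not> (det3 (u i) (u i') (u j) * det3 (u i) (u i') (u j') < 0
        \<and> det3 (u j) (u j') (u i) * det3 (u j) (u j') (u i') < 0)"
  using cross_gen[OF assms(1,2,3)] assms(3,4,5) by (simp add: vtx_def nonadjacent_def)

lemma hemi:
  assumes "\<not> in_closed_hemisphere 6 u" "det3 (u i) (u j) (u k0) \<noteq> 0"
  shows "\<exists>k<6. det3 (u i) (u j) (u k) < 0" "\<exists>k<6. det3 (u i) (u j) (u k) > 0"
proof -
  have v: "cross3 (u i) (u j) \<noteq> 0" using assms(2) by (auto simp: det3_cross)
  from assms(1) v obtain k where "k<6" "\<not> cross3 (u i) (u j) \<bullet> u k \<ge> 0"
    unfolding in_closed_hemisphere_def by blast
  thus "\<exists>k<6. det3 (u i) (u j) (u k) < 0" by (auto simp: det3_cross)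
  from assms(1) v obtain k where "k<6" "\<not> (- cross3 (u i) (u j)) \<bullet> u k \<ge> 0"
    unfolding in_closed_hemisphere_def by (metis neg_equal_0_iff_equal)
  thus "\<exists>k<6. det3 (u i) (u j) (u k) > 0" by (auto simp: det3_cross)
qed

lemma ex6: "(\<exists>k<(6::nat). P k) = (P 0 \<or> P 1 \<or> P 2 \<or> P 3 \<or> P 4 \<or> P 5)"
  by (auto simp: numeral_eq_Suc less_Suc_eq)

lemma perm_eqs:
  fixes u :: "nat \<Rightarrow> real^3"
  shows "det3 (u 0) (u 2) (u 1) = - det3 (u 0) (u 1) (u 2)"
    "det3 (u 0) (u 3) (u 1) = - det3 (u 0) (u 1) (u 3)"
    "det3 (u 0) (u 3) (u 2) = - det3 (u 0) (u 2) (u 3)"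
    "det3 (u 0) (u 4) (u 1) = - det3 (u 0) (u 1) (u 4)"
    "det3 (u 0) (u 4) (u 2) = - det3 (u 0) (u 2) (u 4)"
    "det3 (u 0) (u 4) (u 3) = - det3 (u 0) (u 3) (u 4)"
    "det3 (u 0) (u 5) (u 1) = - det3 (u 0) (u 1) (u 5)"
    "det3 (u 0) (u 5) (u 2) = - det3 (u 0) (u 2) (u 5)"
    "det3 (u 0) (u 5) (u 3) = - det3 (u 0) (u 3) (u 5)"
    "det3 (u 0) (u 5) (u 4) = - det3 (u 0) (u 4) (u 5)"
    "det3 (u 1) (u 0) (u 2) = - det3 (u 0) (u 1) (u 2)"
    "det3 (u 1) (u 0) (u 3) = - det3 (u 0) (u 1) (u 3)"
    "det3 (u 1) (u 0) (u 4) = - det3 (u 0) (u 1) (u 4)"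
    "det3 (u 1) (u 0) (u 5) = - det3 (u 0) (u 1) (u 5)"
    "det3 (u 1) (u 2) (u 0) = det3 (u 0) (u 1) (u 2)"
    "det3 (u 1) (u 3) (u 0) = det3 (u 0) (u 1) (u 3)"
    "det3 (u 1) (u 3) (u 2) = - det3 (u 1) (u 2) (u 3)"
    "det3 (u 1) (u 4) (u 0) = det3 (u 0) (u 1) (u 4)"
    "det3 (u 1) (u 4) (u 2) = - det3 (u 1) (u 2) (u 4)"
    "det3 (u 1) (u 4) (u 3) = - det3 (u 1) (u 3) (u 4)"
    "det3 (u 1) (u 5) (u 0) = det3 (u 0) (u 1) (u 5)"
    "det3 (u 1) (u 5) (u 2) = - det3 (u 1) (u 2) (u 5)"
    "det3 (u 1) (u 5) (u 3) = - det3 (u 1) (u 3) (u 5)"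
    "det3 (u 1) (u 5) (u 4) = - det3 (u 1) (u 4) (u 5)"
    "det3 (u 2) (u 0) (u 1) = det3 (u 0) (u 1) (u 2)"
    "det3 (u 2) (u 0) (u 3) = - det3 (u 0) (u 2) (u 3)"
    "det3 (u 2) (u 0) (u 4) = - det3 (u 0) (u 2) (u 4)"
    "det3 (u 2) (u 0) (u 5) = - det3 (u 0) (u 2) (u 5)"
    "det3 (u 2) (u 1) (u 0) = - det3 (u 0) (u 1) (u 2)"
    "det3 (u 2) (u 1) (u 3) = - det3 (u 1) (u 2) (u 3)"
    "det3 (u 2) (u 1) (u 4) = - det3 (u 1) (u 2) (u 4)"
    "det3 (u 2) (u 1) (u 5) = - det3 (u 1) (u 2) (u 5)"
    "det3 (u 2) (u 3) (u 0) = det3 (u 0) (u 2) (u 3)"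
    "det3 (u 2) (u 3) (u 1) = det3 (u 1) (u 2) (u 3)"
    "det3 (u 2) (u 4) (u 0) = det3 (u 0) (u 2) (u 4)"
    "det3 (u 2) (u 4) (u 1) = det3 (u 1) (u 2) (u 4)"
    "det3 (u 2) (u 4) (u 3) = - det3 (u 2) (u 3) (u 4)"
    "det3 (u 2) (u 5) (u 0) = det3 (u 0) (u 2) (u 5)"
    "det3 (u 2) (u 5) (u 1) = det3 (u 1) (u 2) (u 5)"
    "det3 (u 2) (u 5) (u 3) = - det3 (u 2) (u 3) (u 5)"
    "det3 (u 2) (u 5) (u 4) = - det3 (u 2) (u 4) (u 5)"
    "det3 (u 3) (u 0) (u 1) = det3 (u 0) (u 1) (u 3)"
    "det3 (u 3) (u 0) (u 2) = det3 (u 0) (u 2) (u 3)"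
    "det3 (u 3) (u 0) (u 4) = - det3 (u 0) (u 3) (u 4)"
    "det3 (u 3) (u 0) (u 5) = - det3 (u 0) (u 3) (u 5)"
    "det3 (u 3) (u 1) (u 0) = - det3 (u 0) (u 1) (u 3)"
    "det3 (u 3) (u 1) (u 2) = det3 (u 1) (u 2) (u 3)"
    "det3 (u 3) (u 1) (u 4) = - det3 (u 1) (u 3) (u 4)"
    "det3 (u 3) (u 1) (u 5) = - det3 (u 1) (u 3) (u 5)"
    "det3 (u 3) (u 2) (u 0) = - det3 (u 0) (u 2) (u 3)"
    "det3 (u 3) (u 2) (u 1) = - det3 (u 1) (u 2) (u 3)"
    "det3 (u 3) (u 2) (u 4) = - det3 (u 2) (u 3) (u 4)"
    "det3 (u 3) (u 2) (u 5) = - det3 (u 2) (u 3) (u 5)"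
    "det3 (u 3) (u 4) (u 0) = det3 (u 0) (u 3) (u 4)"
    "det3 (u 3) (u 4) (u 1) = det3 (u 1) (u 3) (u 4)"
    "det3 (u 3) (u 4) (u 2) = det3 (u 2) (u 3) (u 4)"
    "det3 (u 3) (u 5) (u 0) = det3 (u 0) (u 3) (u 5)"
    "det3 (u 3) (u 5) (u 1) = det3 (u 1) (u 3) (u 5)"
    "det3 (u 3) (u 5) (u 2) = det3 (u 2) (u 3) (u 5)"
    "det3 (u 3) (u 5) (u 4) = - det3 (u 3) (u 4) (u 5)"
    "det3 (u 4) (u 0) (u 1) = det3 (u 0) (u 1) (u 4)"
    "det3 (u 4) (u 0) (u 2) = det3 (u 0) (u 2) (u 4)"
    "det3 (u 4) (u 0) (u 3) = det3 (u 0) (u 3) (u 4)"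
    "det3 (u 4) (u 0) (u 5) = - det3 (u 0) (u 4) (u 5)"
    "det3 (u 4) (u 1) (u 0) = - det3 (u 0) (u 1) (u 4)"
    "det3 (u 4) (u 1) (u 2) = det3 (u 1) (u 2) (u 4)"
    "det3 (u 4) (u 1) (u 3) = det3 (u 1) (u 3) (u 4)"
    "det3 (u 4) (u 1) (u 5) = - det3 (u 1) (u 4) (u 5)"
    "det3 (u 4) (u 2) (u 0) = - det3 (u 0) (u 2) (u 4)"
    "det3 (u 4) (u 2) (u 1) = - det3 (u 1) (u 2) (u 4)"
    "det3 (u 4) (u 2) (u 3) = det3 (u 2) (u 3) (u 4)"
    "det3 (u 4) (u 2) (u 5) = - det3 (u 2) (u 4) (u 5)"
    "det3 (u 4) (u 3) (u 0) = - det3 (u 0) (u 3) (u 4)"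
    "det3 (u 4) (u 3) (u 1) = - det3 (u 1) (u 3) (u 4)"
    "det3 (u 4) (u 3) (u 2) = - det3 (u 2) (u 3) (u 4)"
    "det3 (u 4) (u 3) (u 5) = - det3 (u 3) (u 4) (u 5)"
    "det3 (u 4) (u 5) (u 0) = det3 (u 0) (u 4) (u 5)"
    "det3 (u 4) (u 5) (u 1) = det3 (u 1) (u 4) (u 5)"
    "det3 (u 4) (u 5) (u 2) = det3 (u 2) (u 4) (u 5)"
    "det3 (u 4) (u 5) (u 3) = det3 (u 3) (u 4) (u 5)"
    "det3 (u 5) (u 0) (u 1) = det3 (u 0) (u 1) (u 5)"
    "det3 (u 5) (u 0) (u 2) = det3 (u 0) (u 2) (u 5)"
    "det3 (u 5) (u 0) (u 3) = det3 (u 0) (u 3) (u 5)"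
    "det3 (u 5) (u 0) (u 4) = det3 (u 0) (u 4) (u 5)"
    "det3 (u 5) (u 1) (u 0) = - det3 (u 0) (u 1) (u 5)"
    "det3 (u 5) (u 1) (u 2) = det3 (u 1) (u 2) (u 5)"
    "det3 (u 5) (u 1) (u 3) = det3 (u 1) (u 3) (u 5)"
    "det3 (u 5) (u 1) (u 4) = det3 (u 1) (u 4) (u 5)"
    "det3 (u 5) (u 2) (u 0) = - det3 (u 0) (u 2) (u 5)"
    "det3 (u 5) (u 2) (u 1) = - det3 (u 1) (u 2) (u 5)"
    "det3 (u 5) (u 2) (u 3) = det3 (u 2) (u 3) (u 5)"
    "det3 (u 5) (u 2) (u 4) = det3 (u 2) (u 4) (u 5)"
    "det3 (u 5) (u 3) (u 0) = - det3 (u 0) (u 3) (u 5)"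
    "det3 (u 5) (u 3) (u 1) = - det3 (u 1) (u 3) (u 5)"
    "det3 (u 5) (u 3) (u 2) = - det3 (u 2) (u 3) (u 5)"
    "det3 (u 5) (u 3) (u 4) = det3 (u 3) (u 4) (u 5)"
    "det3 (u 5) (u 4) (u 0) = - det3 (u 0) (u 4) (u 5)"
    "det3 (u 5) (u 4) (u 1) = - det3 (u 1) (u 4) (u 5)"
    "det3 (u 5) (u 4) (u 2) = - det3 (u 2) (u 4) (u 5)"
    "det3 (u 5) (u 4) (u 3) = - det3 (u 3) (u 4) (u 5)"
  by (simp_all add: det3_exp)

theorem proposition4:
  fixes u :: "nat \<Rightarrow> real^3"
  assumes "\<forall>i<6. on_sphere (u i)"
    and "no_three_on_great_circle 6 u"
    and "\<not> in_closed_hemisphere 6 u"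
    and "\<not> has_self_intersection 6 u"
    and "\<not> has_antipodal_intersection 6 u"
  shows "num_inflections 6 u = 6"
proof -
  note nt = assms(2)[unfolded no_three_on_great_circle_def, rule_format]
  have n0: "det3 (u 0) (u 1) (u 2) \<noteq> 0" using nt[of 0 1 2] by simp
  have n1: "det3 (u 0) (u 1) (u 3) \<noteq> 0" using nt[of 0 1 3] by simp
  have n2: "det3 (u 0) (u 1) (u 4) \<noteq> 0" using nt[of 0 1 4] by simp
  have n3: "det3 (u 0) (u 1) (u 5) \<noteq> 0" using nt[of 0 1 5] by simp
  have n4: "det3 (u 0) (u 2) (u 3) \<noteq> 0" using nt[of 0 2 3] by simp
  have n5: "det3 (u 0) (u 2) (u 4) \<noteq> 0" using nt[of 0 2 4] by simp
  have n6: "det3 (u 0) (u 2) (u 5) \<noteq> 0" using nt[of 0 2 5] by simp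
  have n7: "det3 (u 0) (u 3) (u 4) \<noteq> 0" using nt[of 0 3 4] by simp
  have n8: "det3 (u 0) (u 3) (u 5) \<noteq> 0" using nt[of 0 3 5] by simp
  have n9: "det3 (u 0) (u 4) (u 5) \<noteq> 0" using nt[of 0 4 5] by simp
  have n10: "det3 (u 1) (u 2) (u 3) \<noteq> 0" using nt[of 1 2 3] by simp
  have n11: "det3 (u 1) (u 2) (u 4) \<noteq> 0" using nt[of 1 2 4] by simp
  have n12: "det3 (u 1) (u 2) (u 5) \<noteq> 0" using nt[of 1 2 5] by simp
  have n13: "det3 (u 1) (u 3) (u 4) \<noteq> 0" using nt[of 1 3 4] by simp
  have n14: "det3 (u 1) (u 3) (u 5) \<noteq> 0" using nt[of 1 3 5] by simp
  have n15: "det3 (u 1) (u 4) (u 5) \<noteq> 0" using nt[of 1 4 5] by simp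
  have n16: "det3 (u 2) (u 3) (u 4) \<noteq> 0" using nt[of 2 3 4] by simp
  have n17: "det3 (u 2) (u 3) (u 5) \<noteq> 0" using nt[of 2 3 5] by simp
  have n18: "det3 (u 2) (u 4) (u 5) \<noteq> 0" using nt[of 2 4 5] by simp
  have n19: "det3 (u 3) (u 4) (u 5) \<noteq> 0" using nt[of 3 4 5] by simp
  have nz0: "det3 (u 0) (u 1) (u 2) \<noteq> 0" by (fact n0)
  have pa0: "det3 (u 0) (u 1) (u 2) < 0 \<or> det3 (u 0) (u 1) (u 3) < 0 \<or> det3 (u 0) (u 1) (u 4) < 0 \<or> det3 (u 0) (u 1) (u 5) < 0" using hemi(1)[OF assms(3) nz0] unfolding ex6 by (auto simp: det3_rep)
  have pb0: "det3 (u 0) (u 1) (u 2) > 0 \<or> det3 (u 0) (u 1) (u 3) > 0 \<or> det3 (u 0) (u 1) (u 4) > 0 \<or> det3 (u 0) (u 1) (u 5) > 0" using hemi(2)[OF assms(3) nz0] unfolding ex6 by (auto simp: det3_rep)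
  have nz1: "det3 (u 0) (u 2) (u 1) \<noteq> 0" using n0 by (simp only: perm_eqs neg_equal_0_iff_equal not_False_eq_True)
  have pa1: "det3 (u 0) (u 2) (u 1) < 0 \<or> det3 (u 0) (u 2) (u 3) < 0 \<or> det3 (u 0) (u 2) (u 4) < 0 \<or> det3 (u 0) (u 2) (u 5) < 0" using hemi(1)[OF assms(3) nz1] unfolding ex6 by (auto simp: det3_rep)
  have pb1: "det3 (u 0) (u 2) (u 1) > 0 \<or> det3 (u 0) (u 2) (u 3) > 0 \<or> det3 (u 0) (u 2) (u 4) > 0 \<or> det3 (u 0) (u 2) (u 5) > 0" using hemi(2)[OF assms(3) nz1] unfolding ex6 by (auto simp: det3_rep)
  have nz2: "det3 (u 0) (u 3) (u 1) \<noteq> 0" using n1 by (simp only: perm_eqs neg_equal_0_iff_equal not_False_eq_True)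
  have pa2: "det3 (u 0) (u 3) (u 1) < 0 \<or> det3 (u 0) (u 3) (u 2) < 0 \<or> det3 (u 0) (u 3) (u 4) < 0 \<or> det3 (u 0) (u 3) (u 5) < 0" using hemi(1)[OF assms(3) nz2] unfolding ex6 by (auto simp: det3_rep)
  have pb2: "det3 (u 0) (u 3) (u 1) > 0 \<or> det3 (u 0) (u 3) (u 2) > 0 \<or> det3 (u 0) (u 3) (u 4) > 0 \<or> det3 (u 0) (u 3) (u 5) > 0" using hemi(2)[OF assms(3) nz2] unfolding ex6 by (auto simp: det3_rep)
  have nz3: "det3 (u 0) (u 4) (u 1) \<noteq> 0" using n2 by (simp only: perm_eqs neg_equal_0_iff_equal not_False_eq_True)
  have pa3: "det3 (u 0) (u 4) (u 1) < 0 \<or> det3 (u 0) (u 4) (u 2) < 0 \<or> det3 (u 0) (u 4) (u 3) < 0 \<or> det3 (u 0) (u 4) (u 5) < 0" using hemi(1)[OF assms(3) nz3] unfolding ex6 by (auto simp: det3_rep)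
  have pb3: "det3 (u 0) (u 4) (u 1) > 0 \<or> det3 (u 0) (u 4) (u 2) > 0 \<or> det3 (u 0) (u 4) (u 3) > 0 \<or> det3 (u 0) (u 4) (u 5) > 0" using hemi(2)[OF assms(3) nz3] unfolding ex6 by (auto simp: det3_rep)
  have nz4: "det3 (u 0) (u 5) (u 1) \<noteq> 0" using n3 by (simp only: perm_eqs neg_equal_0_iff_equal not_False_eq_True)
  have pa4: "det3 (u 0) (u 5) (u 1) < 0 \<or> det3 (u 0) (u 5) (u 2) < 0 \<or> det3 (u 0) (u 5) (u 3) < 0 \<or> det3 (u 0) (u 5) (u 4) < 0" using hemi(1)[OF assms(3) nz4] unfolding ex6 by (auto simp: det3_rep)
  have pb4: "det3 (u 0) (u 5) (u 1) > 0 \<or> det3 (u 0) (u 5) (u 2) > 0 \<or> det3 (u 0) (u 5) (u 3) > 0 \<or> det3 (u 0) (u 5) (u 4) > 0" using hemi(2)[OF assms(3) nz4] unfolding ex6 by (auto simp: det3_rep)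
  have nz5: "det3 (u 1) (u 2) (u 0) \<noteq> 0" using n0 by (simp only: perm_eqs neg_equal_0_iff_equal not_False_eq_True)
  have pa5: "det3 (u 1) (u 2) (u 0) < 0 \<or> det3 (u 1) (u 2) (u 3) < 0 \<or> det3 (u 1) (u 2) (u 4) < 0 \<or> det3 (u 1) (u 2) (u 5) < 0" using hemi(1)[OF assms(3) nz5] unfolding ex6 by (auto simp: det3_rep)
  have pb5: "det3 (u 1) (u 2) (u 0) > 0 \<or> det3 (u 1) (u 2) (u 3) > 0 \<or> det3 (u 1) (u 2) (u 4) > 0 \<or> det3 (u 1) (u 2) (u 5) > 0" using hemi(2)[OF assms(3) nz5] unfolding ex6 by (auto simp: det3_rep)
  have nz6: "det3 (u 1) (u 3) (u 0) \<noteq> 0" using n1 by (simp only: perm_eqs neg_equal_0_iff_equal not_False_eq_True)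
  have pa6: "det3 (u 1) (u 3) (u 0) < 0 \<or> det3 (u 1) (u 3) (u 2) < 0 \<or> det3 (u 1) (u 3) (u 4) < 0 \<or> det3 (u 1) (u 3) (u 5) < 0" using hemi(1)[OF assms(3) nz6] unfolding ex6 by (auto simp: det3_rep)
  have pb6: "det3 (u 1) (u 3) (u 0) > 0 \<or> det3 (u 1) (u 3) (u 2) > 0 \<or> det3 (u 1) (u 3) (u 4) > 0 \<or> det3 (u 1) (u 3) (u 5) > 0" using hemi(2)[OF assms(3) nz6] unfolding ex6 by (auto simp: det3_rep)
  have nz7: "det3 (u 1) (u 4) (u 0) \<noteq> 0" using n2 by (simp only: perm_eqs neg_equal_0_iff_equal not_False_eq_True)
  have pa7: "det3 (u 1) (u 4) (u 0) < 0 \<or> det3 (u 1) (u 4) (u 2) < 0 \<or> det3 (u 1) (u 4) (u 3) < 0 \<or> det3 (u 1) (u 4) (u 5) < 0" using hemi(1)[OF assms(3) nz7] unfolding ex6 by (auto simp: det3_rep)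
  have pb7: "det3 (u 1) (u 4) (u 0) > 0 \<or> det3 (u 1) (u 4) (u 2) > 0 \<or> det3 (u 1) (u 4) (u 3) > 0 \<or> det3 (u 1) (u 4) (u 5) > 0" using hemi(2)[OF assms(3) nz7] unfolding ex6 by (auto simp: det3_rep)
  have nz8: "det3 (u 1) (u 5) (u 0) \<noteq> 0" using n3 by (simp only: perm_eqs neg_equal_0_iff_equal not_False_eq_True)
  have pa8: "det3 (u 1) (u 5) (u 0) < 0 \<or> det3 (u 1) (u 5) (u 2) < 0 \<or> det3 (u 1) (u 5) (u 3) < 0 \<or> det3 (u 1) (u 5) (u 4) < 0" using hemi(1)[OF assms(3) nz8] unfolding ex6 by (auto simp: det3_rep)
  have pb8: "det3 (u 1) (u 5) (u 0) > 0 \<or> det3 (u 1) (u 5) (u 2) > 0 \<or> det3 (u 1) (u 5) (u 3) > 0 \<or> det3 (u 1) (u 5) (u 4) > 0" using hemi(2)[OF assms(3) nz8] unfolding ex6 by (auto simp: det3_rep)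
  have nz9: "det3 (u 2) (u 3) (u 0) \<noteq> 0" using n4 by (simp only: perm_eqs neg_equal_0_iff_equal not_False_eq_True)
  have pa9: "det3 (u 2) (u 3) (u 0) < 0 \<or> det3 (u 2) (u 3) (u 1) < 0 \<or> det3 (u 2) (u 3) (u 4) < 0 \<or> det3 (u 2) (u 3) (u 5) < 0" using hemi(1)[OF assms(3) nz9] unfolding ex6 by (auto simp: det3_rep)
  have pb9: "det3 (u 2) (u 3) (u 0) > 0 \<or> det3 (u 2) (u 3) (u 1) > 0 \<or> det3 (u 2) (u 3) (u 4) > 0 \<or> det3 (u 2) (u 3) (u 5) > 0" using hemi(2)[OF assms(3) nz9] unfolding ex6 by (auto simp: det3_rep)
  have nz10: "det3 (u 2) (u 4) (u 0) \<noteq> 0" using n5 by (simp only: perm_eqs neg_equal_0_iff_equal not_False_eq_True)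
  have pa10: "det3 (u 2) (u 4) (u 0) < 0 \<or> det3 (u 2) (u 4) (u 1) < 0 \<or> det3 (u 2) (u 4) (u 3) < 0 \<or> det3 (u 2) (u 4) (u 5) < 0" using hemi(1)[OF assms(3) nz10] unfolding ex6 by (auto simp: det3_rep)
  have pb10: "det3 (u 2) (u 4) (u 0) > 0 \<or> det3 (u 2) (u 4) (u 1) > 0 \<or> det3 (u 2) (u 4) (u 3) > 0 \<or> det3 (u 2) (u 4) (u 5) > 0" using hemi(2)[OF assms(3) nz10] unfolding ex6 by (auto simp: det3_rep)
  have nz11: "det3 (u 2) (u 5) (u 0) \<noteq> 0" using n6 by (simp only: perm_eqs neg_equal_0_iff_equal not_False_eq_True)
  have pa11: "det3 (u 2) (u 5) (u 0) < 0 \<or> det3 (u 2) (u 5) (u 1) < 0 \<or> det3 (u 2) (u 5) (u 3) < 0 \<or> det3 (u 2) (u 5) (u 4) < 0" using hemi(1)[OF assms(3) nz11] unfolding ex6 by (auto simp: det3_rep)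
  have pb11: "det3 (u 2) (u 5) (u 0) > 0 \<or> det3 (u 2) (u 5) (u 1) > 0 \<or> det3 (u 2) (u 5) (u 3) > 0 \<or> det3 (u 2) (u 5) (u 4) > 0" using hemi(2)[OF assms(3) nz11] unfolding ex6 by (auto simp: det3_rep)
  have nz12: "det3 (u 3) (u 4) (u 0) \<noteq> 0" using n7 by (simp only: perm_eqs neg_equal_0_iff_equal not_False_eq_True)
  have pa12: "det3 (u 3) (u 4) (u 0) < 0 \<or> det3 (u 3) (u 4) (u 1) < 0 \<or> det3 (u 3) (u 4) (u 2) < 0 \<or> det3 (u 3) (u 4) (u 5) < 0" using hemi(1)[OF assms(3) nz12] unfolding ex6 by (auto simp: det3_rep)
  have pb12: "det3 (u 3) (u 4) (u 0) > 0 \<or> det3 (u 3) (u 4) (u 1) > 0 \<or> det3 (u 3) (u 4) (u 2) > 0 \<or> det3 (u 3) (u 4) (u 5) > 0" using hemi(2)[OF assms(3) nz12] unfolding ex6 by (auto simp: det3_rep)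
  have nz13: "det3 (u 3) (u 5) (u 0) \<noteq> 0" using n8 by (simp only: perm_eqs neg_equal_0_iff_equal not_False_eq_True)
  have pa13: "det3 (u 3) (u 5) (u 0) < 0 \<or> det3 (u 3) (u 5) (u 1) < 0 \<or> det3 (u 3) (u 5) (u 2) < 0 \<or> det3 (u 3) (u 5) (u 4) < 0" using hemi(1)[OF assms(3) nz13] unfolding ex6 by (auto simp: det3_rep)
  have pb13: "det3 (u 3) (u 5) (u 0) > 0 \<or> det3 (u 3) (u 5) (u 1) > 0 \<or> det3 (u 3) (u 5) (u 2) > 0 \<or> det3 (u 3) (u 5) (u 4) > 0" using hemi(2)[OF assms(3) nz13] unfolding ex6 by (auto simp: det3_rep)
  have nz14: "det3 (u 4) (u 5) (u 0) \<noteq> 0" using n9 by (simp only: perm_eqs neg_equal_0_iff_equal not_False_eq_True)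
  have pa14: "det3 (u 4) (u 5) (u 0) < 0 \<or> det3 (u 4) (u 5) (u 1) < 0 \<or> det3 (u 4) (u 5) (u 2) < 0 \<or> det3 (u 4) (u 5) (u 3) < 0" using hemi(1)[OF assms(3) nz14] unfolding ex6 by (auto simp: det3_rep)
  have pb14: "det3 (u 4) (u 5) (u 0) > 0 \<or> det3 (u 4) (u 5) (u 1) > 0 \<or> det3 (u 4) (u 5) (u 2) > 0 \<or> det3 (u 4) (u 5) (u 3) > 0" using hemi(2)[OF assms(3) nz14] unfolding ex6 by (auto simp: det3_rep)
  have c0: "\<not> (det3 (u 0) (u 1) (u 2) * det3 (u 0) (u 1) (u 3) < 0 \<and> det3 (u 2) (u 3) (u 0) * det3 (u 2) (u 3) (u 1) < 0)" by (rule cross_gen6[OF assms(4) assms(5)]) (simp_all add: nonadjacent_def)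
  have c1: "\<not> (det3 (u 0) (u 1) (u 3) * det3 (u 0) (u 1) (u 4) < 0 \<and> det3 (u 3) (u 4) (u 0) * det3 (u 3) (u 4) (u 1) < 0)" by (rule cross_gen6[OF assms(4) assms(5)]) (simp_all add: nonadjacent_def)
  have c2: "\<not> (det3 (u 0) (u 1) (u 4) * det3 (u 0) (u 1) (u 5) < 0 \<and> det3 (u 4) (u 5) (u 0) * det3 (u 4) (u 5) (u 1) < 0)" by (rule cross_gen6[OF assms(4) assms(5)]) (simp_all add: nonadjacent_def)
  have c3: "\<not> (det3 (u 1) (u 2) (u 3) * det3 (u 1) (u 2) (u 4) < 0 \<and> det3 (u 3) (u 4) (u 1) * det3 (u 3) (u 4) (u 2) < 0)" by (rule cross_gen6[OF assms(4) assms(5)]) (simp_all add: nonadjacent_def)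
  have c4: "\<not> (det3 (u 1) (u 2) (u 4) * det3 (u 1) (u 2) (u 5) < 0 \<and> det3 (u 4) (u 5) (u 1) * det3 (u 4) (u 5) (u 2) < 0)" by (rule cross_gen6[OF assms(4) assms(5)]) (simp_all add: nonadjacent_def)
  have c5: "\<not> (det3 (u 1) (u 2) (u 5) * det3 (u 1) (u 2) (u 0) < 0 \<and> det3 (u 5) (u 0) (u 1) * det3 (u 5) (u 0) (u 2) < 0)" by (rule cross_gen6[OF assms(4) assms(5)]) (simp_all add: nonadjacent_def)
  have c6: "\<not> (det3 (u 2) (u 3) (u 4) * det3 (u 2) (u 3) (u 5) < 0 \<and> det3 (u 4) (u 5) (u 2) * det3 (u 4) (u 5) (u 3) < 0)" by (rule cross_gen6[OF assms(4) assms(5)]) (simp_all add: nonadjacent_def)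
  have c7: "\<not> (det3 (u 2) (u 3) (u 5) * det3 (u 2) (u 3) (u 0) < 0 \<and> det3 (u 5) (u 0) (u 2) * det3 (u 5) (u 0) (u 3) < 0)" by (rule cross_gen6[OF assms(4) assms(5)]) (simp_all add: nonadjacent_def)
  have c8: "\<not> (det3 (u 3) (u 4) (u 5) * det3 (u 3) (u 4) (u 0) < 0 \<and> det3 (u 5) (u 0) (u 3) * det3 (u 5) (u 0) (u 4) < 0)" by (rule cross_gen6[OF assms(4) assms(5)]) (simp_all add: nonadjacent_def)
  note g0 = gp_sign[OF gp_id[of "u 0" "u 1" "u 2" "u 3" "u 4"]]
  note g1 = gp_sign[OF gp_id[of "u 0" "u 1" "u 2" "u 3" "u 5"]]
  note g2 = gp_sign[OF gp_id[of "u 0" "u 1" "u 2" "u 4" "u 5"]]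
  note g3 = gp_sign[OF gp_id[of "u 0" "u 1" "u 3" "u 4" "u 5"]]
  note g4 = gp_sign[OF gp_id[of "u 0" "u 2" "u 3" "u 4" "u 5"]]
  note g5 = gp_sign[OF gp_id[of "u 1" "u 0" "u 2" "u 3" "u 4"]]
  note g6 = gp_sign[OF gp_id[of "u 1" "u 0" "u 2" "u 3" "u 5"]]
  note g7 = gp_sign[OF gp_id[of "u 1" "u 0" "u 2" "u 4" "u 5"]]
  note g8 = gp_sign[OF gp_id[of "u 1" "u 0" "u 3" "u 4" "u 5"]]
  note g9 = gp_sign[OF gp_id[of "u 1" "u 2" "u 3" "u 4" "u 5"]]
  note g10 = gp_sign[OF gp_id[of "u 2" "u 0" "u 1" "u 3" "u 4"]]
  note g11 = gp_sign[OF gp_id[of "u 2" "u 0" "u 1" "u 3" "u 5"]]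
  note g12 = gp_sign[OF gp_id[of "u 2" "u 0" "u 1" "u 4" "u 5"]]
  note g13 = gp_sign[OF gp_id[of "u 2" "u 0" "u 3" "u 4" "u 5"]]
  note g14 = gp_sign[OF gp_id[of "u 2" "u 1" "u 3" "u 4" "u 5"]]
  note g15 = gp_sign[OF gp_id[of "u 3" "u 0" "u 1" "u 2" "u 4"]]
  note g16 = gp_sign[OF gp_id[of "u 3" "u 0" "u 1" "u 2" "u 5"]]
  note g17 = gp_sign[OF gp_id[of "u 3" "u 0" "u 1" "u 4" "u 5"]]
  note g18 = gp_sign[OF gp_id[of "u 3" "u 0" "u 2" "u 4" "u 5"]]
  note g19 = gp_sign[OF gp_id[of "u 3" "u 1" "u 2" "u 4" "u 5"]]
  note g20 = gp_sign[OF gp_id[of "u 4" "u 0" "u 1" "u 2" "u 3"]]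
  note g21 = gp_sign[OF gp_id[of "u 4" "u 0" "u 1" "u 2" "u 5"]]
  note g22 = gp_sign[OF gp_id[of "u 4" "u 0" "u 1" "u 3" "u 5"]]
  note g23 = gp_sign[OF gp_id[of "u 4" "u 0" "u 2" "u 3" "u 5"]]
  note g24 = gp_sign[OF gp_id[of "u 4" "u 1" "u 2" "u 3" "u 5"]]
  note g25 = gp_sign[OF gp_id[of "u 5" "u 0" "u 1" "u 2" "u 3"]]
  note g26 = gp_sign[OF gp_id[of "u 5" "u 0" "u 1" "u 2" "u 4"]]
  note g27 = gp_sign[OF gp_id[of "u 5" "u 0" "u 1" "u 3" "u 4"]]
  note g28 = gp_sign[OF gp_id[of "u 5" "u 0" "u 2" "u 3" "u 4"]]
  note g29 = gp_sign[OF gp_id[of "u 5" "u 1" "u 2" "u 3" "u 4"]]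
  have main: "det3 (u 5) (u 0) (u 1) * det3 (u 0) (u 1) (u 2) < 0 \<and> det3 (u 0) (u 1) (u 2) * det3 (u 1) (u 2) (u 3) < 0 \<and> det3 (u 1) (u 2) (u 3) * det3 (u 2) (u 3) (u 4) < 0 \<and> det3 (u 2) (u 3) (u 4) * det3 (u 3) (u 4) (u 5) < 0 \<and> det3 (u 3) (u 4) (u 5) * det3 (u 4) (u 5) (u 0) < 0 \<and> det3 (u 4) (u 5) (u 0) * det3 (u 5) (u 0) (u 1) < 0"
    using n0 n1 n2 n3 n4 n5 n6 n7 n8 n9 n10 n11 n12 n13 n14 n15 n16 n17 n18 n19 pa0 pb0 pa1 pb1 pa2 pb2 pa3 pb3 pa4 pb4 pa5 pb5 pa6 pb6 pa7 pb7 pa8 pb8 pa9 pb9 pa10 pb10 pa11 pb11 pa12 pb12 pa13 pb13 pa14 pb14 c0 c1 c2 c3 c4 c5 c6 c7 c8 g0 g1 g2 g3 g4 g5 g6 g7 g8 g9 g10 g11 g12 g13 g14 g15 g16 g17 g18 g19 g20 g21 g22 g23 g24 g25 g26 g27 g28 g29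
    apply (simp only: perm_eqs zero_less_mult_iff mult_less_0_iff neg_0_less_iff_less neg_less_0_iff_less mult_minus_left mult_minus_right minus_mult_minus)
    by smt
  have i0: "is_inflection 6 u 0"
  proof -
    have e: "vtx 6 u (0 + 6 - 1) = u 5" "vtx 6 u 0 = u 0" "vtx 6 u (0 + 1) = u 1" "vtx 6 u (0 + 2) = u 2" unfolding vtx_def by (rule arg_cong[where f=u], simp)+
    show ?thesis unfolding is_inflection_def e using main by blast
  qed
  have i1: "is_inflection 6 u 1"
  proof -
    have e: "vtx 6 u (1 + 6 - 1) = u 0" "vtx 6 u 1 = u 1" "vtx 6 u (1 + 1) = u 2" "vtx 6 u (1 + 2) = u 3" unfolding vtx_def by (rule arg_cong[where f=u], simp)+
    show ?thesis unfolding is_inflection_def e using main by blast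
  qed
  have i2: "is_inflection 6 u 2"
  proof -
    have e: "vtx 6 u (2 + 6 - 1) = u 1" "vtx 6 u 2 = u 2" "vtx 6 u (2 + 1) = u 3" "vtx 6 u (2 + 2) = u 4" unfolding vtx_def by (rule arg_cong[where f=u], simp)+
    show ?thesis unfolding is_inflection_def e using main by blast
  qed
  have i3: "is_inflection 6 u 3"
  proof -
    have e: "vtx 6 u (3 + 6 - 1) = u 2" "vtx 6 u 3 = u 3" "vtx 6 u (3 + 1) = u 4" "vtx 6 u (3 + 2) = u 5" unfolding vtx_def by (rule arg_cong[where f=u], simp)+
    show ?thesis unfolding is_inflection_def e using main by blast
  qed
  have i4: "is_inflection 6 u 4"
  proof -
    have e: "vtx 6 u (4 + 6 - 1) = u 3" "vtx 6 u 4 = u 4" "vtx 6 u (4 + 1) = u 5" "vtx 6 u (4 + 2) = u 0" unfolding vtx_def by (rule arg_cong[where f=u], simp)+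
    show ?thesis unfolding is_inflection_def e using main by blast
  qed
  have i5: "is_inflection 6 u 5"
  proof -
    have e: "vtx 6 u (5 + 6 - 1) = u 4" "vtx 6 u 5 = u 5" "vtx 6 u (5 + 1) = u 0" "vtx 6 u (5 + 2) = u 1" unfolding vtx_def by (rule arg_cong[where f=u], simp)+
    show ?thesis unfolding is_inflection_def e using main by blast
  qed
  note infl = i0 i1 i2 i3 i4 i5
  have "\<forall>i<6. is_inflection 6 u i"
  proof (intro allI impI)
    fix i :: nat assume "i < 6"
    hence "i = 0 \<or> i = 1 \<or> i = 2 \<or> i = 3 \<or> i = 4 \<or> i = 5" by auto
    thus "is_inflection 6 u i" using infl by (elim disjE) auto
  qed
  hence "{i. i < 6 \<and> is_inflection 6 u i} = {..<6}" by auto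
  thus ?thesis unfolding num_inflections_def by simp
qed

end
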